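(* The vector fields of the central system pairwise commute: for all $j,k\ge1$, $[X_j,X_k]=0$ on $\mathcal H$, i.e. for every $i\ge0$, $$\frac{\partial}{\partial t_j}\Big(\frac{\partial H^{(i)}}{\partial t_k}\Big)=\frac{\partial}{\partial t_k}\Big(\frac{\partial H^{(i)}}{\partial t_j}\Big),$$ where the derivative along $X_j$ of the components of $X_k$ (which are polynomials in the coordinates $H^a_l$) is computed by the chain rule.
   Context: Let $z$ be a formal variable and $\mathcal L$ the space of formal Laurent series $\sum_{j\le N} l_j z^j$ (finitely many positive powers of $z$). Let $\mathcal H$ be the set of sequences $H=(H^{(k)})_{k\ge0}$ of elements of $\mathcal L$ with $H^{(0)}=1$ and, for $k\ge1$, $H^{(k)}=z^k+\sum_{l\ge1}H^k_l z^{-l}$; the coefficients $H^k_l$ are coordinates on $\mathcal H$, and we set $H^0_l=0$. The central system (CS) is the family of vector fields $X_j$, $j\ge1$, on $\mathcal H$, with associated times $t_j$, defined by $$\frac{\partial H^{(k)}}{\partial t_j}=H^{(j+k)}-H^{(j)}H^{(k)}+\sum_{l=1}^{k}H^j_lH^{(k-l)}+\sum_{l=1}^{j}H^k_lH^{(j-l)},\qquad k\ge0;$$ the right-hand side contains only negative powers of $z$, so this determines the components $X_j(H^k_l)$. *)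

theory Defs
  imports Complex_Main
begin

text \<open>A point of the space H is given by its coordinates H a l (a \<ge> 1, l \<ge> 1),
 stored as a function nat => nat => real; entries with a = 0 or l = 0 are ignored
 (convention H^0_l = 0).\<close>

type_synonym cs_point = "nat \<Rightarrow> nat \<Rightarrow> real"

definition coord :: "cs_point \<Rightarrow> nat \<Rightarrow> nat \<Rightarrow> real" where
  "coord H a l = (if a = 0 \<or> l = 0 then 0 else H a l)"

text \<open>Coefficient of z^n in the Laurent series H^(a):
 H^(0) = 1,  H^(a) = z^a + sum_{l>=1} H^a_l z^(-l).\<close>
definition hc :: "cs_point \<Rightarrow> nat \<Rightarrow> int \<Rightarrow> real" where
  "hc H a n = (if n = int a then 1 else if n < 0 then coord H a (nat (- n)) else 0)"

definition prodc :: "cs_point \<Rightarrow> nat \<Rightarrow> nat \<Rightarrow> int \<Rightarrow> real" where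
  "prodc H a b n = (\<Sum>p\<in>{n - int b..int a}. hc H a p * hc H b (n - p))"

text \<open>Component X_j(H^k_m) of the central system vector field: the coefficient of z^(-m)
 of H^(j+k) - H^(j) H^(k) + sum_{l=1}^k H^j_l H^(k-l) + sum_{l=1}^j H^k_l H^(j-l).\<close>
definition CS_field :: "nat \<Rightarrow> cs_point \<Rightarrow> nat \<Rightarrow> nat \<Rightarrow> real" where
  "CS_field j H k m =
     hc H (j + k) (- int m) - prodc H j k (- int m)
     + (\<Sum>l=1..k. coord H j l * hc H (k - l) (- int m))
     + (\<Sum>l=1..j. coord H k l * hc H (j - l) (- int m))"

text \<open>Since G depends polynomially on finitely many coordinates this is the
 chain-rule derivative sum_{a,l} dG/dH^a_l * X_j(H^a_l).\<close>
definition lie_deriv :: "nat \<Rightarrow> (cs_point \<Rightarrow> real) \<Rightarrow> cs_point \<Rightarrow> real \<Rightarrow> bool" where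
  "lie_deriv j G H D \<longleftrightarrow>
     ((\<lambda>\<epsilon>. G (\<lambda>a l. H a l + \<epsilon> * CS_field j H a l)) has_real_derivative D) (at 0)"

end

theory Submission
  imports Defs "HOL-Computational_Algebra.Formal_Laurent_Series"
begin

unbundle fps_syntax

definition Af :: "cs_point \<Rightarrow> nat \<Rightarrow> real fls" where
  "Af H a = Abs_fls (\<lambda>n. hc H a (-n))"

lemma Af_nth: "Af H a $$ n = hc H a (-n)"
  unfolding Af_def
  by (rule nth_Abs_fls_lower_bound[of "- int a"]) (auto simp: hc_def)

definition Pf :: "(nat \<Rightarrow> real) \<Rightarrow> real fls" where
  "Pf c = Abs_fls (\<lambda>n. if n > 0 then c (nat n) else 0)"

lemma Pf_nth: "Pf c $$ n = (if n > 0 then c (nat n) else 0)"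
  unfolding Pf_def
  by (rule nth_Abs_fls_lower_bound[of 0]) auto

lemma Af_split: "Af H a = fls_X_intpow (- int a) + Pf (coord H a)"
  by (rule fls_eqI) (auto simp: Af_nth Pf_nth hc_def coord_def)

lemma fls_times_nth_bounds:
  fixes f g :: "real fls"
  assumes "\<forall>i<a. f $$ i = 0" "\<forall>i<b. g $$ i = 0"
  shows "(f * g) $$ n = (\<Sum>i=a..n-b. f $$ i * g $$ (n - i))"
proof (cases "f = 0 \<or> g = 0")
  case True
  then show ?thesis by auto
next
  case False
  have da: "a \<le> fls_subdegree f" using False assms(1) by (intro fls_subdegree_geI) auto
  have db: "b \<le> fls_subdegree g" using False assms(2) by (intro fls_subdegree_geI) auto
  have "(f * g) $$ n = (\<Sum>i=fls_subdegree f..n - fls_subdegree g. f $$ i * g $$ (n - i))"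
    by (rule fls_times_nth(2))
  also have "\<dots> = (\<Sum>i=a..n-b. f $$ i * g $$ (n - i))"
    by (rule sum.mono_neutral_left) (use da db in auto)
  finally show ?thesis .
qed

lemma prodc_eq: "prodc H a b n = (Af H a * Af H b) $$ (- n)"
proof -
  have "(Af H a * Af H b) $$ (- n) = (\<Sum>i= - int a.. - n - (- int b). Af H a $$ i * Af H b $$ (- n - i))"
    by (rule fls_times_nth_bounds) (auto simp: Af_nth hc_def)
  also have "\<dots> = prodc H a b n"
    unfolding prodc_def
    by (rule sum.reindex_bij_witness[of _ uminus uminus]) (auto simp: Af_nth add.commute)
  finally show ?thesis by simp
qed


definition FF :: "cs_point \<Rightarrow> nat \<Rightarrow> nat \<Rightarrow> real fls" where
  "FF H k i = Af H (k + i) - Af H k * Af H i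
     + (\<Sum>l=1..i. fls_const (coord H k l) * Af H (i - l))
     + (\<Sum>l=1..k. fls_const (coord H i l) * Af H (k - l))"

lemma CS_field_eq: "CS_field k H i m = FF H k i $$ int m"
  unfolding CS_field_def FF_def
  by (simp add: fls_nth_sum Af_nth prodc_eq)

lemma Af_nonpos: "n \<le> 0 \<Longrightarrow> Af H a $$ n = (if n = - int a then 1 else 0)"
  by (auto simp: Af_nth hc_def)

lemma sum_delta_aux:
  fixes n :: int
  assumes "n \<le> 0"
  shows "(\<Sum>l=1..a. x l * (if n = int l - int a then 1 else 0)) = Pf x $$ (n + int a)"
proof (cases "n + int a > 0")
  case True
  define l0 where "l0 = nat (n + int a)"
  have l0: "l0 \<in> {1..a}" using True assms unfolding l0_def by auto
  have "(\<Sum>l=1..a. x l * (if n = int l - int a then 1 else 0)) = (\<Sum>l=1..a. if l = l0 then x l else 0)"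
    by (rule sum.cong) (use True assms in \<open>auto simp: l0_def\<close>)
  also have "\<dots> = x l0" using l0 by simp
  finally show ?thesis using True by (simp add: Pf_nth l0_def)
next
  case False
  have "(\<Sum>l=1..a. x l * (if n = int l - int a then 1 else 0)) = (\<Sum>l=1..a. 0)"
    by (rule sum.cong) (use False assms in auto)
  then show ?thesis using False by (simp add: Pf_nth)
qed

lemma Pf_Pf_nonpos: "n \<le> 1 \<Longrightarrow> (Pf x * Pf y) $$ n = 0"
proof -
  assume n: "n \<le> 1"
  have "(Pf x * Pf y) $$ n = (\<Sum>i=1..n-1. Pf x $$ i * Pf y $$ (n - i))"
    by (rule fls_times_nth_bounds) (auto simp: Pf_nth)
  then show ?thesis using n by simp
qed

lemma Af_Af_nonpos:
  assumes "n \<le> 0"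
  shows "(Af H a * Af H b) $$ n = (if n = - int (a + b) then 1 else 0)
      + Pf (coord H b) $$ (n + int a) + Pf (coord H a) $$ (n + int b)"
proof -
  have "Af H a * Af H b = fls_X_intpow (- int a) * fls_X_intpow (- int b)
     + fls_X_intpow (- int a) * Pf (coord H b) + fls_X_intpow (- int b) * Pf (coord H a)
     + Pf (coord H a) * Pf (coord H b)"
    by (simp add: Af_split algebra_simps)
  also have "\<dots> = fls_X_intpow (- int a - int b) + fls_shift (int a) (Pf (coord H b))
     + fls_shift (int b) (Pf (coord H a)) + Pf (coord H a) * Pf (coord H b)"
    using fls_X_intpow_times_fls_X_intpow[of "- int a" "- int b", where 'a=real]
      fls_X_intpow_times_conv_shift(1)[of "- int a" "Pf (coord H b)"]
      fls_X_intpow_times_conv_shift(1)[of "- int b" "Pf (coord H a)"]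
    by (simp add: algebra_simps)
  finally show ?thesis using assms by (simp add: Pf_Pf_nonpos)
qed

lemma FF_nonpos: assumes n: "n \<le> 0" shows "FF H k i $$ n = 0"
  using sum_delta_aux[OF n, of "coord H k" i] sum_delta_aux[OF n, of "coord H i" k] n
  unfolding FF_def
  by (simp add: fls_nth_sum Af_nonpos Af_Af_nonpos)


definition inSp :: "cs_point \<Rightarrow> real fls \<Rightarrow> bool" where
  "inSp H g \<longleftrightarrow> (\<exists>N0. \<forall>N\<ge>N0. g = (\<Sum>n<N. fls_const (g $$ (- int n)) * Af H n))"

lemma inSp_Af: "inSp H (Af H a)"
  unfolding inSp_def
proof (intro exI[of _ "Suc a"] allI impI)
  fix N assume N: "N \<ge> Suc a"
  have "(\<Sum>n<N. fls_const (Af H a $$ (- int n)) * Af H n) = (\<Sum>n<N. if n = a then Af H a else 0)"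
    by (rule sum.cong) (auto simp: Af_nth hc_def)
  also have "\<dots> = Af H a" using N by simp
  finally show "Af H a = (\<Sum>n<N. fls_const (Af H a $$ (- int n)) * Af H n)" by simp
qed

lemma inSp_0: "inSp H 0"
  unfolding inSp_def by simp

lemma inSp_add: "inSp H g \<Longrightarrow> inSp H h \<Longrightarrow> inSp H (g + h)"
  unfolding inSp_def
proof -
  assume "\<exists>N0. \<forall>N\<ge>N0. g = (\<Sum>n<N. fls_const (g $$ (- int n)) * Af H n)"
    "\<exists>N0. \<forall>N\<ge>N0. h = (\<Sum>n<N. fls_const (h $$ (- int n)) * Af H n)"
  then obtain N1 N2 where 1: "\<forall>N\<ge>N1. g = (\<Sum>n<N. fls_const (g $$ (- int n)) * Af H n)"
     and 2: "\<forall>N\<ge>N2. h = (\<Sum>n<N. fls_const (h $$ (- int n)) * Af H n)" by blast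
  show "\<exists>N0. \<forall>N\<ge>N0. g + h = (\<Sum>n<N. fls_const ((g + h) $$ (- int n)) * Af H n)"
  proof (intro exI[of _ "max N1 N2"] allI impI)
    fix N assume "N \<ge> max N1 N2"
    then have "g + h = (\<Sum>n<N. fls_const (g $$ (- int n)) * Af H n) + (\<Sum>n<N. fls_const (h $$ (- int n)) * Af H n)"
      using 1 2 by auto
    also have "\<dots> = (\<Sum>n<N. fls_const ((g + h) $$ (- int n)) * Af H n)"
      by (simp add: sum.distrib[symmetric] fls_plus_const[symmetric] algebra_simps)
    finally show "g + h = (\<Sum>n<N. fls_const ((g + h) $$ (- int n)) * Af H n)" .
  qed
qed

lemma inSp_smult: "inSp H g \<Longrightarrow> inSp H (fls_const c * g)"
  unfolding inSp_def
proof -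
  assume "\<exists>N0. \<forall>N\<ge>N0. g = (\<Sum>n<N. fls_const (g $$ (- int n)) * Af H n)"
  then obtain N1 where 1: "\<forall>N\<ge>N1. g = (\<Sum>n<N. fls_const (g $$ (- int n)) * Af H n)" by blast
  show "\<exists>N0. \<forall>N\<ge>N0. fls_const c * g = (\<Sum>n<N. fls_const ((fls_const c * g) $$ (- int n)) * Af H n)"
  proof (intro exI[of _ N1] allI impI)
    fix N assume "N \<ge> N1"
    then have "fls_const c * g = fls_const c * (\<Sum>n<N. fls_const (g $$ (- int n)) * Af H n)"
      using 1 by auto
    also have "\<dots> = (\<Sum>n<N. fls_const ((fls_const c * g) $$ (- int n)) * Af H n)"
      by (simp add: sum_distrib_left mult.assoc[symmetric])
    finally show "fls_const c * g = (\<Sum>n<N. fls_const ((fls_const c * g) $$ (- int n)) * Af H n)" .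
  qed
qed

lemma inSp_diff: "inSp H g \<Longrightarrow> inSp H h \<Longrightarrow> inSp H (g - h)"
  using inSp_add[of H g "fls_const (-1) * h"] inSp_smult[of H h "-1"] by simp

lemma inSp_sum: "finite A \<Longrightarrow> (\<And>x. x \<in> A \<Longrightarrow> inSp H (f x)) \<Longrightarrow> inSp H (\<Sum>x\<in>A. f x)"
  by (induction A rule: finite_induct) (auto intro: inSp_0 inSp_add)

lemma inSp_zero:
  assumes "inSp H g" "\<And>n. n \<le> 0 \<Longrightarrow> g $$ n = 0"
  shows "g = 0"
proof -
  obtain N0 where "\<forall>N\<ge>N0. g = (\<Sum>n<N. fls_const (g $$ (- int n)) * Af H n)"
    using assms(1) unfolding inSp_def by blast
  then have "g = (\<Sum>n<N0. fls_const (g $$ (- int n)) * Af H n)" by blast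
  also have "\<dots> = 0" using assms(2) by simp
  finally show ?thesis .
qed

lemma Af_pert: "Af (\<lambda>a l. H a l + e * V a l) a = Af H a + fls_const e * Pf (coord V a)"
  by (rule fls_eqI) (auto simp: Af_nth Pf_nth hc_def coord_def)

lemma coord_pert: "coord (\<lambda>a l. H a l + e * V a l) a l = coord H a l + e * coord V a l"
  by (simp add: coord_def)

lemma pert_ring:
  fixes A W :: "nat \<Rightarrow> 'r::comm_ring_1" and c v :: "nat \<Rightarrow> nat \<Rightarrow> 'r" and e :: 'r
  shows "(A (k+i) + e * W (k+i)) - (A k + e * W k) * (A i + e * W i)
     + (\<Sum>l=1..i. (c k l + e * v k l) * (A (i-l) + e * W (i-l)))
     + (\<Sum>l=1..k. (c i l + e * v i l) * (A (k-l) + e * W (k-l)))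
   = (A (k+i) - A k * A i + (\<Sum>l=1..i. c k l * A (i-l)) + (\<Sum>l=1..k. c i l * A (k-l)))
     + e * (W (k+i) - (W k * A i + A k * W i)
        + (\<Sum>l=1..i. v k l * A (i-l) + c k l * W (i-l))
        + (\<Sum>l=1..k. v i l * A (k-l) + c i l * W (k-l)))
     + e^2 * (- (W k * W i) + (\<Sum>l=1..i. v k l * W (i-l)) + (\<Sum>l=1..k. v i l * W (k-l)))"
  by (simp add: algebra_simps sum.distrib sum_distrib_left power2_eq_square)


definition LL :: "cs_point \<Rightarrow> cs_point \<Rightarrow> nat \<Rightarrow> nat \<Rightarrow> real fls" where
  "LL H V k i = Pf (coord V (k+i)) - (Pf (coord V k) * Af H i + Af H k * Pf (coord V i))
        + (\<Sum>l=1..i. fls_const (coord V k l) * Af H (i-l) + fls_const (coord H k l) * Pf (coord V (i-l)))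
        + (\<Sum>l=1..k. fls_const (coord V i l) * Af H (k-l) + fls_const (coord H i l) * Pf (coord V (k-l)))"

definition QQ :: "cs_point \<Rightarrow> cs_point \<Rightarrow> nat \<Rightarrow> nat \<Rightarrow> real fls" where
  "QQ H V k i = - (Pf (coord V k) * Pf (coord V i))
     + (\<Sum>l=1..i. fls_const (coord V k l) * Pf (coord V (i-l)))
     + (\<Sum>l=1..k. fls_const (coord V i l) * Pf (coord V (k-l)))"

lemma fls_const_lin: "fls_const (x + e * y) = fls_const x + fls_const e * (fls_const y :: real fls)"
  by (simp add: fls_plus_const)

lemma FF_pert:
  "FF (\<lambda>a l. H a l + e * V a l) k i = FF H k i + fls_const e * LL H V k i + fls_const e ^ 2 * QQ H V k i"
proof -
  have "FF (\<lambda>a l. H a l + e * V a l) k i =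
     (Af H (k+i) + fls_const e * Pf (coord V (k+i))) - (Af H k + fls_const e * Pf (coord V k)) * (Af H i + fls_const e * Pf (coord V i))
     + (\<Sum>l=1..i. (fls_const (coord H k l) + fls_const e * fls_const (coord V k l)) * (Af H (i-l) + fls_const e * Pf (coord V (i-l))))
     + (\<Sum>l=1..k. (fls_const (coord H i l) + fls_const e * fls_const (coord V i l)) * (Af H (k-l) + fls_const e * Pf (coord V (k-l))))"
    unfolding FF_def Af_pert coord_pert fls_const_lin ..
  also have "\<dots> = FF H k i + fls_const e * LL H V k i + fls_const e ^ 2 * QQ H V k i"
    unfolding FF_def LL_def QQ_def by (rule pert_ring)
  finally show ?thesis .
qed

lemma poly_deriv0: "((\<lambda>e::real. a + e * b + e^2 * c) has_real_derivative b) (at 0)"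
  by (auto intro!: derivative_eq_intros)

lemma pert_poly: "CS_field k (\<lambda>a l. H a l + e * V a l) i m
   = FF H k i $$ int m + e * LL H V k i $$ int m + e^2 * QQ H V k i $$ int m"
  by (simp add: CS_field_eq FF_pert fls_const_power[symmetric])

lemma lie_deriv_LL: "lie_deriv j (\<lambda>H'. CS_field k H' i m) H (LL H (CS_field j H) k i $$ int m)"
  unfolding lie_deriv_def pert_poly by (rule poly_deriv0)

lemma LL_nonpos: assumes n: "n \<le> 0" shows "LL H V k i $$ n = 0"
proof -
  have "\<And>e. FF H k i $$ n + e * LL H V k i $$ n + e^2 * QQ H V k i $$ n = 0"
    using FF_nonpos[OF n, of "\<lambda>a l. H a l + _ * V a l" k i]
    by (simp add: FF_pert fls_const_power[symmetric])
  from this[of 1] this[of "-1"] show ?thesis by simp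
qed


lemma Af_0: "Af H 0 = 1"
  by (rule fls_eqI) (auto simp: Af_nth hc_def coord_def)

lemma FF_0: "FF H j 0 = 0"
  unfolding FF_def by (simp add: Af_0 coord_def)

lemma Pf_V: "Pf (coord (CS_field j H) a) = FF H j a"
proof (rule fls_eqI)
  fix n
  show "Pf (coord (CS_field j H) a) $$ n = FF H j a $$ n"
  proof (cases "n > 0")
    case True
    then show ?thesis
      by (auto simp: Pf_nth coord_def CS_field_eq FF_0)
  next
    case False
    then show ?thesis by (simp add: Pf_nth FF_nonpos)
  qed
qed

definition RR :: "cs_point \<Rightarrow> nat \<Rightarrow> nat \<Rightarrow> real fls" where
  "RR H a b = Af H (a + b) + (\<Sum>l=1..b. fls_const (coord H a l) * Af H (b - l))
     + (\<Sum>l=1..a. fls_const (coord H b l) * Af H (a - l))"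

lemma RR_sym: "RR H a b = RR H b a"
  unfolding RR_def by (simp add: algebra_simps)

lemma FF_RR: "FF H a b = RR H a b - Af H a * Af H b"
  unfolding FF_def RR_def by (simp add: algebra_simps)

lemma RR_inSp: "inSp H (RR H a b)"
  unfolding RR_def
  by (intro inSp_add inSp_Af inSp_sum inSp_smult) auto

lemma ring2:
  fixes A :: "nat \<Rightarrow> 'r::comm_ring_1" and R c v :: "nat \<Rightarrow> nat \<Rightarrow> 'r"
  assumes "R k i = A (k+i) + (\<Sum>l=1..i. c k l * A (i-l)) + (\<Sum>l=1..k. c i l * A (k-l))"
  shows "(R j (k+i) - A j * A (k+i)) - ((R j k - A j * A k) * A i + A k * (R j i - A j * A i))
     + (\<Sum>l=1..i. v k l * A (i-l) + c k l * (R j (i-l) - A j * A (i-l)))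
     + (\<Sum>l=1..k. v i l * A (k-l) + c i l * (R j (k-l) - A j * A (k-l)))
   = (R j (k+i) + (\<Sum>l=1..i. v k l * A (i-l) + c k l * R j (i-l))
        + (\<Sum>l=1..k. v i l * A (k-l) + c i l * R j (k-l)))
     - A j * R k i - R j k * A i - A k * R j i + 2 * A i * A j * A k"
  unfolding assms
  by (simp add: algebra_simps sum.distrib sum_subtractf sum_distrib_left)


definition SS :: "cs_point \<Rightarrow> nat \<Rightarrow> nat \<Rightarrow> nat \<Rightarrow> real fls" where
  "SS H j k i = RR H j (k+i)
     + (\<Sum>l=1..i. fls_const (coord (CS_field j H) k l) * Af H (i-l) + fls_const (coord H k l) * RR H j (i-l))
     + (\<Sum>l=1..k. fls_const (coord (CS_field j H) i l) * Af H (k-l) + fls_const (coord H i l) * RR H j (k-l))"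

lemma SS_inSp: "inSp H (SS H j k i)"
  unfolding SS_def
  by (intro inSp_add inSp_Af inSp_sum inSp_smult RR_inSp) auto

lemma LL_decomp: "LL H (CS_field j H) k i = SS H j k i
   - Af H j * RR H k i - RR H j k * Af H i - Af H k * RR H j i + 2 * Af H i * Af H j * Af H k"
  unfolding LL_def Pf_V FF_RR SS_def
  by (rule ring2[where c = "\<lambda>a l. fls_const (coord H a l)"]) (simp add: RR_def)

theorem mainTheorem4:
  fixes j k i m :: nat and H :: cs_point
  assumes "j \<ge> 1" and "k \<ge> 1" and "m \<ge> 1"
  shows "\<exists>D. lie_deriv j (\<lambda>H'. CS_field k H' i m) H D
            \<and> lie_deriv k (\<lambda>H'. CS_field j H' i m) H D"
proof -
  have eq: "LL H (CS_field j H) k i - LL H (CS_field k H) j i = SS H j k i - SS H k j i"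
    unfolding LL_decomp using RR_sym[of H j k] RR_sym[of H k i] RR_sym[of H j i]
    by (simp add: algebra_simps)
  have "LL H (CS_field j H) k i - LL H (CS_field k H) j i = 0"
  proof (rule inSp_zero[of H])
    show "inSp H (LL H (CS_field j H) k i - LL H (CS_field k H) j i)"
      unfolding eq by (intro inSp_diff SS_inSp)
    show "(LL H (CS_field j H) k i - LL H (CS_field k H) j i) $$ n = 0" if "n \<le> 0" for n
      using that by (simp add: LL_nonpos)
  qed
  then have "LL H (CS_field j H) k i = LL H (CS_field k H) j i" by simp
  then show ?thesis
    using lie_deriv_LL[of j k i m H] lie_deriv_LL[of k j i m H] by auto
qed

end
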